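(* Let $\gamma>0$, $\Omega=(0,\pi)$, and let $\mathcal{W}$ be the generator of the weakly coupled thermoelastic system, acting on $\mathcal{H}=L^2(\Omega)^3$ by \[ \mathcal{W}\begin{pmatrix} w\\ v\\ \theta\end{pmatrix}=\begin{pmatrix} \partial_x v\\ \partial_x w-\gamma\theta\\ \gamma v+\partial_x^2\theta\end{pmatrix}, \] where $(w,v,\theta)=(\partial_x u,\partial_t u,\theta)$, with domain encoding any one of the following boundary conditions at $x=0,\pi$: (1) $u=0$ and $\theta=0$; (2) $u=0$ and $\partial_x\theta=0$; (3) $\partial_x u=0$ and $\theta=0$; (4) $\partial_x u=0$ and $\partial_x\theta=0$. Then, for each of these four boundary conditions, the spectrum of $\mathcal{W}$ asymptotically lies along the imaginary axis and the negative real axis: every eigenvalue $\lambda$ of $\mathcal{W}$ with sufficiently large $|\lambda|$ satisfies \[ \lambda\sim i n\qquad\text{or}\qquad \lambda\sim -n^{2} \] for some large integer $n$.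
   Context: This operator corresponds to the weakly coupled thermoelastic system $\partial_t^2u-\partial_x^2u+\gamma\theta=0$, $\partial_t\theta-\partial_x^2\theta-\gamma\partial_t u=0$ on $(0,\pi)\times(0,\infty)$. The spectrum of $\mathcal{W}$ consists of eigenvalues only ($\mathcal{W}^{-1}$ is compact). The notation $\lambda\sim \mu_n$ means that $\lambda$ is asymptotically equal to $\mu_n$ as $|\lambda|\to\infty$. *)

theory Defs
  imports "HOL-Analysis.Analysis"
begin

text \<open>The four boundary conditions at x = 0 and x = pi, written for the state
  (w, v, theta) = (u_x, u_t, theta):
  BC1: u = 0 and theta = 0        (i.e. v = 0, theta = 0)
  BC2: u = 0 and theta_x = 0      (i.e. v = 0, theta' = 0)
  BC3: u_x = 0 and theta = 0      (i.e. w = 0, theta = 0)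
  BC4: u_x = 0 and theta_x = 0    (i.e. w = 0, theta' = 0)\<close>

datatype thermo_bc = BC1 | BC2 | BC3 | BC4

definition thermo_boundary ::
  "thermo_bc \<Rightarrow> (real \<Rightarrow> complex) \<Rightarrow> (real \<Rightarrow> complex) \<Rightarrow> (real \<Rightarrow> complex)
     \<Rightarrow> (real \<Rightarrow> complex) \<Rightarrow> bool" where
  "thermo_boundary b w v th th' =
     (case b of
        BC1 \<Rightarrow> v 0 = 0 \<and> v pi = 0 \<and> th 0 = 0 \<and> th pi = 0
      | BC2 \<Rightarrow> v 0 = 0 \<and> v pi = 0 \<and> th' 0 = 0 \<and> th' pi = 0
      | BC3 \<Rightarrow> w 0 = 0 \<and> w pi = 0 \<and> th 0 = 0 \<and> th pi = 0
      | BC4 \<Rightarrow> w 0 = 0 \<and> w pi = 0 \<and> th' 0 = 0 \<and> th' pi = 0)"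

text \<open>Eigenfunctions of W are smooth (ODE regularity), so the
  eigenvalue problem is stated for classical solutions on the closed interval.\<close>

definition thermo_eigenvalue :: "real \<Rightarrow> thermo_bc \<Rightarrow> complex \<Rightarrow> bool" where
  "thermo_eigenvalue \<gamma> b mu \<longleftrightarrow>
     (\<exists>w v th w' v' th' th''.
        (\<forall>x\<in>{0..pi}.
            (w has_vector_derivative w' x) (at x within {0..pi}) \<and>
            (v has_vector_derivative v' x) (at x within {0..pi}) \<and>
            (th has_vector_derivative th' x) (at x within {0..pi}) \<and>
            (th' has_vector_derivative th'' x) (at x within {0..pi}) \<and>
            v' x = mu * w x \<and>
            w' x - complex_of_real \<gamma> * th x = mu * v x \<and>
            complex_of_real \<gamma> * v x + th'' x = mu * th x) \<and>
        thermo_boundary b w v th th' \<and>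
        (\<exists>x\<in>{0..pi}. w x \<noteq> 0 \<or> v x \<noteq> 0 \<or> th x \<noteq> 0))"

end

theory Submission
  imports Defs
begin


lemma ibp_identity:
  fixes f g f' g' :: "real \<Rightarrow> complex" and h :: "real \<Rightarrow> complex"
  assumes df: "\<And>x. x \<in> {0..pi} \<Longrightarrow> (f has_vector_derivative f' x) (at x within {0..pi})"
    and dg: "\<And>x. x \<in> {0..pi} \<Longrightarrow> (g has_vector_derivative g' x) (at x within {0..pi})"
    and bd: "f pi * cnj (g pi) = 0" "f 0 * cnj (g 0) = 0"
  shows "((\<lambda>x. f x * cnj (g' x) + f' x * cnj (g x)) has_integral 0) {0..pi}"
proof -
  have "((\<lambda>x. f x * cnj (g x)) has_vector_derivative (f x * cnj (g' x) + f' x * cnj (g x))) (at x within {0..pi})"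
    if "x \<in> {0..pi}" for x
    by (intro has_vector_derivative_mult has_vector_derivative_cnj df dg that)
  from fundamental_theorem_of_calculus[OF _ this] show ?thesis using bd by simp
qed

lemma cont_of_deriv:
  fixes f f' :: "real \<Rightarrow> complex"
  assumes df: "\<And>x. x \<in> {0..pi} \<Longrightarrow> (f has_vector_derivative f' x) (at x within {0..pi})"
  shows "continuous_on {0..pi} f"
  using df has_vector_derivative_continuous continuous_on_eq_continuous_within by blast

lemma sq_int:
  fixes f :: "real \<Rightarrow> complex"
  assumes "continuous_on {0..pi} f"
  shows "((\<lambda>x. f x * cnj (f x)) has_integral complex_of_real (integral {0..pi} (\<lambda>x. (cmod (f x))\<^sup>2))) {0..pi}"
    and "(\<lambda>x. (cmod (f x))\<^sup>2) integrable_on {0..pi}"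
    and "integral {0..pi} (\<lambda>x. (cmod (f x))\<^sup>2) \<ge> 0"
proof -
  have c: "continuous_on {0..pi} (\<lambda>x. (cmod (f x))\<^sup>2)"
    by (intro continuous_intros assms)
  show i: "(\<lambda>x. (cmod (f x))\<^sup>2) integrable_on {0..pi}"
    by (rule integrable_continuous_real[OF c])
  show "((\<lambda>x. f x * cnj (f x)) has_integral complex_of_real (integral {0..pi} (\<lambda>x. (cmod (f x))\<^sup>2))) {0..pi}"
  proof -
    have e: "(\<lambda>x. complex_of_real ((cmod (f x))\<^sup>2)) = (\<lambda>x. f x * cnj (f x))"
      by (simp only: complex_norm_square)
    show ?thesis
      using has_integral_of_real[OF integrable_integral[OF i], where 'b=complex] unfolding e .
  qed
  show "integral {0..pi} (\<lambda>x. (cmod (f x))\<^sup>2) \<ge> 0"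
    by (rule integral_nonneg[OF i]) simp
qed

lemma zero_of_int0:
  fixes f :: "real \<Rightarrow> complex"
  assumes "continuous_on {0..pi} f" "integral {0..pi} (\<lambda>x. (cmod (f x))\<^sup>2) = 0" "x \<in> {0..pi}"
  shows "f x = 0"
proof -
  have c: "continuous_on {0..pi} (\<lambda>x. (cmod (f x))\<^sup>2)"
    by (intro continuous_intros assms)
  have "((\<lambda>x. (cmod (f x))\<^sup>2) has_integral 0) (cbox 0 pi)"
    using integrable_integral[OF integrable_continuous_real[OF c]] assms(2) by simp
  from has_integral_0_cbox_imp_0[OF _ _ this, of x] c assms(3) pi_gt_zero
  show ?thesis by simp
qed

lemma cross_bound:
  fixes f g :: "real \<Rightarrow> complex"
  assumes "continuous_on {0..pi} f" "continuous_on {0..pi} g"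
  shows "(\<lambda>x. f x * cnj (g x)) integrable_on {0..pi}"
   "cmod (integral {0..pi} (\<lambda>x. f x * cnj (g x))) \<le>
      (integral {0..pi} (\<lambda>x. (cmod (f x))\<^sup>2) + integral {0..pi} (\<lambda>x. (cmod (g x))\<^sup>2)) / 2"
proof -
  show i: "(\<lambda>x. f x * cnj (g x)) integrable_on {0..pi}"
    by (intro integrable_continuous_real continuous_intros assms)
  have c: "continuous_on {0..pi} (\<lambda>x. ((cmod (f x))\<^sup>2 + (cmod (g x))\<^sup>2) / 2)"
    by (intro continuous_intros assms) auto
  have "cmod (integral {0..pi} (\<lambda>x. f x * cnj (g x))) \<le> integral {0..pi} (\<lambda>x. ((cmod (f x))\<^sup>2 + (cmod (g x))\<^sup>2) / 2)"
  proof (rule integral_norm_bound_integral[OF i integrable_continuous_real[OF c]])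
    fix x
    have "cmod (f x) * cmod (g x) \<le> ((cmod (f x))\<^sup>2 + (cmod (g x))\<^sup>2) / 2"
      using sum_squares_bound[of "cmod (f x)" "cmod (g x)"] by (simp add: power2_eq_square)
    then show "cmod (f x * cnj (g x)) \<le> ((cmod (f x))\<^sup>2 + (cmod (g x))\<^sup>2) / 2"
      by (simp add: norm_mult)
  qed
  also have "\<dots> = (integral {0..pi} (\<lambda>x. (cmod (f x))\<^sup>2) + integral {0..pi} (\<lambda>x. (cmod (g x))\<^sup>2)) / 2"
  proof -
    have a: "(\<lambda>x. (cmod (f x))\<^sup>2) integrable_on {0..pi}" "(\<lambda>x. (cmod (g x))\<^sup>2) integrable_on {0..pi}"
      by (intro integrable_continuous_real continuous_intros assms)+
    show ?thesis
      unfolding integral_divide integral_add[OF a] ..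
  qed
  finally show "cmod (integral {0..pi} (\<lambda>x. f x * cnj (g x))) \<le>
      (integral {0..pi} (\<lambda>x. (cmod (f x))\<^sup>2) + integral {0..pi} (\<lambda>x. (cmod (g x))\<^sup>2)) / 2" .
qed

lemma eig_identities:
  assumes "thermo_eigenvalue \<gamma> b mu"
  shows "\<exists>Nv Nw NT AT X Y. Nv \<ge> 0 \<and> Nw \<ge> 0 \<and> NT \<ge> 0 \<and> AT \<ge> 0 \<and>
     mu * of_real Nv + cnj mu * of_real Nw + of_real \<gamma> * X = 0 \<and>
     of_real AT + mu * of_real NT - of_real \<gamma> * Y = 0 \<and>
     cmod X \<le> (Nv + NT) / 2 \<and> cmod Y \<le> (Nv + NT) / 2 \<and> \<not> (Nv = 0 \<and> Nw = 0 \<and> NT = 0)"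
proof -
  obtain w v th w' v' th' th'' where
    D: "\<And>x. x \<in> {0..pi} \<Longrightarrow>
            (w has_vector_derivative w' x) (at x within {0..pi}) \<and>
            (v has_vector_derivative v' x) (at x within {0..pi}) \<and>
            (th has_vector_derivative th' x) (at x within {0..pi}) \<and>
            (th' has_vector_derivative th'' x) (at x within {0..pi}) \<and>
            v' x = mu * w x \<and>
            w' x - complex_of_real \<gamma> * th x = mu * v x \<and>
            complex_of_real \<gamma> * v x + th'' x = mu * th x"
    and B: "thermo_boundary b w v th th'"
    and NZ: "\<exists>x\<in>{0..pi}. w x \<noteq> 0 \<or> v x \<noteq> 0 \<or> th x \<noteq> 0"
    using assms unfolding thermo_eigenvalue_def by blast
  have cw: "continuous_on {0..pi} w" by (rule cont_of_deriv) (use D in blast)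
  have cv: "continuous_on {0..pi} v" by (rule cont_of_deriv) (use D in blast)
  have ct: "continuous_on {0..pi} th" by (rule cont_of_deriv) (use D in blast)
  have ct': "continuous_on {0..pi} th'" by (rule cont_of_deriv) (use D in blast)
  define Nv where "Nv = integral {0..pi} (\<lambda>x. (cmod (v x))\<^sup>2)"
  define Nw where "Nw = integral {0..pi} (\<lambda>x. (cmod (w x))\<^sup>2)"
  define NT where "NT = integral {0..pi} (\<lambda>x. (cmod (th x))\<^sup>2)"
  define AT where "AT = integral {0..pi} (\<lambda>x. (cmod (th' x))\<^sup>2)"
  define X where "X = integral {0..pi} (\<lambda>x. th x * cnj (v x))"
  define Y where "Y = integral {0..pi} (\<lambda>x. v x * cnj (th x))"
  note sv = sq_int[OF cv, folded Nv_def]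
  note sw = sq_int[OF cw, folded Nw_def]
  note st = sq_int[OF ct, folded NT_def]
  note st' = sq_int[OF ct', folded AT_def]
  note cX = cross_bound[OF ct cv, folded X_def NT_def Nv_def]
  note cY = cross_bound[OF cv ct, folded Y_def NT_def Nv_def]
  have bd1: "w pi * cnj (v pi) = 0" "w 0 * cnj (v 0) = 0"
    using B by (cases b; simp add: thermo_boundary_def)+
  have bd2: "th' pi * cnj (th pi) = 0" "th' 0 * cnj (th 0) = 0"
    using B by (cases b; simp add: thermo_boundary_def)+
  have I1: "((\<lambda>x. w x * cnj (v' x) + w' x * cnj (v x)) has_integral 0) {0..pi}"
    by (rule ibp_identity[OF _ _ bd1]) (use D in blast)+
  have I1': "((\<lambda>x. w x * cnj (v' x) + w' x * cnj (v x)) has_integral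
      (cnj mu * of_real Nw + mu * of_real Nv + of_real \<gamma> * X)) {0..pi}"
  proof -
    have h: "((\<lambda>x. cnj mu * (w x * cnj (w x)) + mu * (v x * cnj (v x)) + of_real \<gamma> * (th x * cnj (v x))) has_integral
      (cnj mu * of_real Nw + mu * of_real Nv + of_real \<gamma> * X)) {0..pi}"
      unfolding X_def
      by (intro has_integral_add has_integral_mult_right sw(1) sv(1) integrable_integral cX(1))
    have eq:  "w x * cnj (v' x) + w' x * cnj (v x) =
          cnj mu * (w x * cnj (w x)) + mu * (v x * cnj (v x)) + of_real \<gamma> * (th x * cnj (v x))"
      if x: "x \<in> {0..pi}" for x
    proof -
      from x have "v' x = mu * w x" "w' x = mu * v x + of_real \<gamma> * th x" using D[of x] by (auto simp: algebra_simps)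
      then show ?thesis
        by (simp add: algebra_simps)
    qed
    show ?thesis by (rule has_integral_eq[OF _ h]) (simp add: eq)
  qed
  have E1: "mu * of_real Nv + cnj mu * of_real Nw + of_real \<gamma> * X = 0"
    using has_integral_unique[OF I1 I1'] by (simp add: algebra_simps)
  have I2: "((\<lambda>x. th' x * cnj (th' x) + th'' x * cnj (th x)) has_integral 0) {0..pi}"
    by (rule ibp_identity[OF _ _ bd2]) (use D in blast)+
  have I2': "((\<lambda>x. th' x * cnj (th' x) + th'' x * cnj (th x)) has_integral
      (of_real AT + mu * of_real NT - of_real \<gamma> * Y)) {0..pi}"
  proof -
    have h: "((\<lambda>x. th' x * cnj (th' x) + mu * (th x * cnj (th x)) - of_real \<gamma> * (v x * cnj (th x))) has_integral
      (of_real AT + mu * of_real NT - of_real \<gamma> * Y)) {0..pi}"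
      unfolding Y_def
      by (intro has_integral_add has_integral_diff has_integral_mult_right st'(1) st(1) integrable_integral cY(1))
    have eq:  "th' x * cnj (th' x) + mu * (th x * cnj (th x)) - of_real \<gamma> * (v x * cnj (th x)) =
          th' x * cnj (th' x) + th'' x * cnj (th x)"
      if x: "x \<in> {0..pi}" for x
    proof -
      from x have e: "th'' x = mu * th x - of_real \<gamma> * v x" using D[of x] by (auto simp: algebra_simps)
      show ?thesis
        unfolding e by (simp add: algebra_simps)
    qed
    show ?thesis by (rule has_integral_eq[OF _ h]) (simp add: eq)
  qed
  have E2: "of_real AT + mu * of_real NT - of_real \<gamma> * Y = 0"
    using has_integral_unique[OF I2 I2'] by simp
  have NZ': "\<not> (Nv = 0 \<and> Nw = 0 \<and> NT = 0)"
  proof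
    assume z: "Nv = 0 \<and> Nw = 0 \<and> NT = 0"
    from NZ obtain x where x: "x \<in> {0..pi}" "w x \<noteq> 0 \<or> v x \<noteq> 0 \<or> th x \<noteq> 0" by blast
    have "w x = 0" using zero_of_int0[OF cw _ x(1)] z Nw_def by simp
    moreover have "v x = 0" using zero_of_int0[OF cv _ x(1)] z Nv_def by simp
    moreover have "th x = 0" using zero_of_int0[OF ct _ x(1)] z NT_def by simp
    ultimately show False using x(2) by simp
  qed
  show ?thesis
    apply (rule exI[of _ Nv], rule exI[of _ Nw], rule exI[of _ NT], rule exI[of _ AT], rule exI[of _ X], rule exI[of _ Y])
    using cX(2) by (intro conjI sv(3) sw(3) st(3) st'(3) E1 E2 cY(2) NZ') (simp add: add.commute)
qed



lemma round_close:
  fixes b :: real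
  shows "\<bar>b - of_int \<lfloor>b + 1/2\<rfloor>\<bar> \<le> 1/2"
proof -
  have "of_int \<lfloor>b + 1/2\<rfloor> \<le> b + 1/2" "b + 1/2 < of_int \<lfloor>b + 1/2\<rfloor> + 1"
    by linarith+
  then show ?thesis by linarith
qed

lemma caseA:
  fixes mu :: complex and e c :: real
  assumes e: "0 < e" "e \<le> 1" and c: "c = e/4"
    and A1: "2 * \<bar>Re mu * Im mu\<bar> < c * (cmod mu)\<^sup>2"
    and A2: "(Re mu)\<^sup>2 - (Im mu)\<^sup>2 < c * (cmod mu)\<^sup>2"
    and m: "cmod mu > 2/e + 2"
  shows "\<exists>n::int. n \<noteq> 0 \<and> cmod (mu / (\<i> * of_int n) - 1) < e"
proof -
  define a where "a = Re mu"
  define b where "b = Im mu"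
  define m where "m = cmod mu"
  have mab: "m\<^sup>2 = a\<^sup>2 + b\<^sup>2" unfolding m_def a_def b_def by (simp add: cmod_power2)
  have e2: "2/e > 0" using e by simp
  have mpos: "m > 0" using m e2 unfolding m_def by linarith
  have c1: "c \<le> 1/4" "c > 0" using c e by auto
  have "2 * b\<^sup>2 > (1 - c) * m\<^sup>2" using A2 mab unfolding a_def b_def m_def by (simp add: algebra_simps)
  moreover have "(1 - c) * m\<^sup>2 \<ge> (3/4) * m\<^sup>2" using c1 by (intro mult_right_mono) auto
  ultimately have "b\<^sup>2 * 4 > m\<^sup>2" using zero_le_power2[of b] by linarith
  then have "b\<^sup>2 > (m/2)\<^sup>2" by (simp add: power_divide)
  then have bm: "\<bar>b\<bar> > m/2" using power_less_imp_less_base[of "m/2" 2 "\<bar>b\<bar>"] by simp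
  have "\<bar>a\<bar> * m \<le> \<bar>a\<bar> * (2 * \<bar>b\<bar>)" using bm by (intro mult_left_mono) auto
  then have "\<bar>a\<bar> * m \<le> 2 * \<bar>a * b\<bar>" by (simp add: abs_mult)
  also have "\<dots> < c * m\<^sup>2" using A1 unfolding a_def b_def m_def .
  finally have "\<bar>a\<bar> * m < (c * m) * m" by (simp add: power2_eq_square mult.assoc)
  then have am: "\<bar>a\<bar> < c * m" using mpos by simp
  define n where "n = \<lfloor>b + 1/2\<rfloor>"
  have bn: "\<bar>b - of_int n\<bar> \<le> 1/2" unfolding n_def by (rule round_close)
  have nb: "\<bar>of_int n\<bar> > m/2 - 1/2" using bn bm by linarith
  have mbig: "m/2 - 1/2 > 0" using m e2 unfolding m_def by linarith
  have n0: "n \<noteq> 0" using nb mbig by auto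
  have "mu - \<i> * of_int n = Complex a (b - of_int n)"
    unfolding a_def b_def by (simp add: complex_eq_iff)
  then have "cmod (mu - \<i> * of_int n) \<le> \<bar>a\<bar> + \<bar>b - of_int n\<bar>"
    using cmod_le[of "Complex a (b - of_int n)"] by simp
  also have "\<dots> < c * m + 1/2" using am bn by linarith
  also have "\<dots> \<le> e * (m/2 - 1/2)"
  proof -
    have "e * m / 4 \<ge> e * (2/e + 2) / 4" using m e unfolding m_def by simp
    also have "e * (2/e + 2) / 4 = 1/2 + e/2" using e by (simp add: field_simps)
    finally have h: "e * m / 4 \<ge> 1/2 + e/2" .
    have "c * m = e * m / 4" using c by simp
    moreover have "e * (m/2 - 1/2) = e * m / 2 - e / 2" by (simp add: algebra_simps)
    ultimately show ?thesis using h by linarith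
  qed
  also have "\<dots> < e * \<bar>of_int n\<bar>" using nb e by simp
  finally have lt: "cmod (mu - \<i> * of_int n) < e * \<bar>of_int n\<bar>" .
  have "mu / (\<i> * of_int n) - 1 = (mu - \<i> * of_int n) / (\<i> * of_int n)"
    using n0 by (simp add: field_simps)
  then have "cmod (mu / (\<i> * of_int n) - 1) = cmod (mu - \<i> * of_int n) / \<bar>of_int n\<bar>"
    by (simp add: norm_divide norm_mult)
  also have "\<dots> < e" using lt n0 by (simp add: divide_less_eq)
  finally show ?thesis using n0 by blast
qed

lemma caseB:
  fixes mu :: complex and e c :: real
  assumes e: "0 < e" "e \<le> 1" and c: "c = e/4"
    and B1: "\<bar>Im mu\<bar> < c * cmod mu"
    and B2: "Re mu < c * cmod mu"
    and m: "cmod mu > 2 * (4/e + 1)\<^sup>2"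
  shows "\<exists>n::int. n \<noteq> 0 \<and> cmod (mu / (- (of_int n)\<^sup>2) - 1) < e"
proof -
  define a where "a = Re mu"
  define b where "b = Im mu"
  define m where "m = cmod mu"
  have mab: "m\<^sup>2 = a\<^sup>2 + b\<^sup>2" unfolding m_def a_def b_def by (simp add: cmod_power2)
  have mpos: "m > 0" using m zero_le_power2[of "4/e+1"] unfolding m_def by linarith
  have c1: "c \<le> 1/4" "c > 0" using c e by auto
  have "\<bar>b\<bar>\<^sup>2 < (c * m)\<^sup>2" by (rule power_strict_mono) (use B1 in \<open>auto simp: b_def m_def\<close>)
  then have b2: "b\<^sup>2 < (c * m)\<^sup>2" by simp
  have cc: "(c * m)\<^sup>2 \<le> m\<^sup>2 / 16"
  proof -
    have "c\<^sup>2 \<le> (1/4)\<^sup>2" using c1 by (intro power_mono) auto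
    then have "c\<^sup>2 * m\<^sup>2 \<le> (1/4)\<^sup>2 * m\<^sup>2" by (intro mult_right_mono) auto
    then show ?thesis by (simp add: power_mult_distrib power_divide)
  qed
  have a2: "a\<^sup>2 > (15/16) * m\<^sup>2" using mab b2 cc by linarith
  have aneg: "a < 0"
  proof (rule ccontr)
    assume "\<not> a < 0"
    then have "0 \<le> a" "a < c * m" using B2 unfolding a_def m_def by auto
    then have "a\<^sup>2 \<le> (c * m)\<^sup>2" by (intro power_mono) auto
    moreover have "m\<^sup>2 > 0" using mpos by simp
    ultimately show False using a2 cc by linarith
  qed
  define s where "s = sqrt (-a)"
  have s2: "s\<^sup>2 = -a" unfolding s_def using aneg by simp
  have spos: "s \<ge> 0" unfolding s_def using aneg by simp
  have sm: "s\<^sup>2 \<le> m" using s2 abs_Re_le_cmod[of mu] unfolding a_def m_def by linarith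
  have "a\<^sup>2 * 4 > m\<^sup>2" using a2 zero_le_power2[of m] by linarith
  then have "(-a)\<^sup>2 > (m/2)\<^sup>2" by (simp add: power_divide)
  then have "-a > m/2" by (rule power_less_imp_less_base[of _ 2]) (use aneg in auto)
  then have sm2: "s\<^sup>2 > m/2" using s2 by simp
  have "s\<^sup>2 > (4/e + 1)\<^sup>2" using sm2 m unfolding m_def by simp
  then have sbig: "s > 4/e + 1" by (rule power_less_imp_less_base[of _ 2]) (use spos in auto)
  have "4/e > 0" using e by simp
  then have s1: "s \<ge> 1" using sbig by linarith
  define n where "n = \<lfloor>s + 1/2\<rfloor>"
  have sn: "\<bar>s - of_int n\<bar> \<le> 1/2" unfolding n_def by (rule round_close)
  have npos: "of_int n \<ge> s - 1/2" "s - 1/2 > 0" using sn s1 by linarith+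
  have n0: "n \<noteq> 0" using npos by auto
  have "(of_int n)\<^sup>2 - s\<^sup>2 = (of_int n - s) * (of_int n + s)"
    by (simp add: power2_eq_square algebra_simps)
  moreover have "\<bar>of_int n + s\<bar> = of_int n + s" using npos spos by simp
  ultimately have "\<bar>(of_int n)\<^sup>2 - s\<^sup>2\<bar> = \<bar>of_int n - s\<bar> * (of_int n + s)"
    by (simp add: abs_mult)
  also have "\<dots> \<le> (1/2) * (2 * s + 1/2)"
    using sn npos spos by (intro mult_mono) linarith+
  finally have ns: "\<bar>(of_int n)\<^sup>2 - s\<^sup>2\<bar> \<le> s + 1/4" by simp
  have "mu + (of_int n)\<^sup>2 = Complex (a + (of_int n)\<^sup>2) b"
    unfolding a_def b_def by (simp add: complex_eq_iff)
  then have "cmod (mu + (of_int n)\<^sup>2) \<le> \<bar>a + (of_int n)\<^sup>2\<bar> + \<bar>b\<bar>"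
    using cmod_le[of "Complex (a + (of_int n)\<^sup>2) b"] by simp
  also have "\<dots> < s + 1/4 + c * m" using ns s2 B1 unfolding b_def m_def by simp
  also have "\<dots> \<le> s + 1/4 + (e/2) * s\<^sup>2"
  proof -
    have "c * m \<le> c * (2 * s\<^sup>2)" using sm2 c1 by (intro mult_left_mono) auto
    moreover have "c * (2 * s\<^sup>2) = (e/2) * s\<^sup>2" using c by simp
    ultimately show ?thesis by linarith
  qed
  also have "\<dots> \<le> e * (s - 1/2)\<^sup>2"
  proof -
    have "(e/2) * s\<^sup>2 = (e/2) * s * s" by (simp add: power2_eq_square)
    also have "\<dots> \<ge> (e/2) * (4/e + 1) * s" using sbig e spos by (intro mult_right_mono) auto
    finally have h0: "(e/2) * s\<^sup>2 \<ge> (e/2) * (4/e + 1) * s" .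
    have "(e/2) * (4/e + 1) * s = 2 * s + (e/2) * s" using e by (simp add: field_simps)
    then have h: "(e/2) * s\<^sup>2 \<ge> 2 * s + (e/2) * s" using h0 by linarith
    have "e * (s - 1/2)\<^sup>2 = e * s\<^sup>2 - e * s + e/4" by (simp add: power2_eq_square algebra_simps)
    moreover have "e * s \<le> 1 * s" using e spos by (intro mult_right_mono) auto
    ultimately show ?thesis using h s1 e by linarith
  qed
  also have "\<dots> \<le> e * (of_int n)\<^sup>2"
    using npos e by (intro mult_left_mono power_mono) auto
  finally have lt: "cmod (mu + (of_int n)\<^sup>2) < e * (of_int n)\<^sup>2" .
  have "mu / (- (of_int n)\<^sup>2) - 1 = - ((mu + (of_int n)\<^sup>2) / (of_int n)\<^sup>2)"
    using n0 by (simp add: field_simps)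
  then have "cmod (mu / (- (of_int n)\<^sup>2) - 1) = cmod (mu + (of_int n)\<^sup>2) / (of_int n)\<^sup>2"
    by (simp add: norm_divide norm_power)
  also have "\<dots> < e" using lt n0 by (simp add: divide_less_eq)
  finally show ?thesis using n0 by blast
qed


lemma alg_main:
  fixes mu X Y :: complex and \<gamma> e c Nv Nw NT AT :: real
  assumes g: "\<gamma> > 0" and c: "c > 0"
    and P: "Nv \<ge> 0" "Nw \<ge> 0" "NT \<ge> 0" "AT \<ge> 0"
    and E1: "mu * of_real Nv + cnj mu * of_real Nw + of_real \<gamma> * X = 0"
    and E2: "of_real AT + mu * of_real NT - of_real \<gamma> * Y = 0"
    and BX: "cmod X \<le> (Nv + NT) / 2" and BY: "cmod Y \<le> (Nv + NT) / 2"
    and NZ: "\<not> (Nv = 0 \<and> Nw = 0 \<and> NT = 0)"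
    and m: "cmod mu > \<gamma> / c"
    and nA: "\<not> (2 * \<bar>Re mu * Im mu\<bar> < c * (cmod mu)\<^sup>2 \<and> (Re mu)\<^sup>2 - (Im mu)\<^sup>2 < c * (cmod mu)\<^sup>2)"
    and nB: "\<not> (\<bar>Im mu\<bar> < c * cmod mu \<and> Re mu < c * cmod mu)"
  shows False
proof -
  define a where "a = Re mu"
  define b where "b = Im mu"
  define m where "m = cmod mu"
  have gc: "\<gamma> / c > 0" using g c by simp
  have mpos: "m > 0" using m gc unfolding m_def by linarith
  have cmg: "c * m > \<gamma>" using m c unfolding m_def by (simp add: divide_less_eq mult.commute)
  have "mu * (mu * of_real Nv + cnj mu * of_real Nw + of_real \<gamma> * X) = 0" using E1 by simp
  then have F: "mu\<^sup>2 * of_real Nv + (mu * cnj mu) * of_real Nw + of_real \<gamma> * (mu * X) = 0"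
    by (simp add: algebra_simps power2_eq_square)
  have mc: "mu * cnj mu = of_real (m\<^sup>2)" unfolding m_def by (rule complex_norm_square[symmetric])
  have FR: "(a\<^sup>2 - b\<^sup>2) * Nv + m\<^sup>2 * Nw + \<gamma> * Re (mu * X) = 0"
    using arg_cong[OF F, of Re] unfolding mc a_def b_def by (simp add: Re_power2)
  have FI: "(2 * a * b) * Nv + \<gamma> * Im (mu * X) = 0"
    using arg_cong[OF F, of Im] unfolding mc a_def b_def by (simp add: Im_power2)
  have RX: "\<bar>Re (mu * X)\<bar> \<le> m * cmod X" "\<bar>Im (mu * X)\<bar> \<le> m * cmod X"
    using abs_Re_le_cmod[of "mu * X"] abs_Im_le_cmod[of "mu * X"] unfolding m_def by (auto simp: norm_mult)
  have K1: "c * m\<^sup>2 * Nv \<le> \<gamma> * (m * cmod X)"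
  proof (cases "2 * \<bar>a * b\<bar> \<ge> c * m\<^sup>2")
    case True
    then have "c * m\<^sup>2 * Nv \<le> (2 * \<bar>a * b\<bar>) * Nv" using P by (intro mult_right_mono) auto
    also have "\<dots> = \<bar>(2 * a * b) * Nv\<bar>" using P by (simp add: abs_mult)
    also have "\<dots> = \<gamma> * \<bar>Im (mu * X)\<bar>" using FI g by (simp add: abs_mult eq_neg_iff_add_eq_0[symmetric])
    also have "\<dots> \<le> \<gamma> * (m * cmod X)" using RX g by (intro mult_left_mono) auto
    finally show ?thesis .
  next
    case False
    then have "(a\<^sup>2 - b\<^sup>2) \<ge> c * m\<^sup>2" using nA unfolding a_def b_def m_def by auto
    then have "c * m\<^sup>2 * Nv \<le> (a\<^sup>2 - b\<^sup>2) * Nv" using P by (intro mult_right_mono) auto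
    also have "\<dots> = - (m\<^sup>2 * Nw) - \<gamma> * Re (mu * X)" using FR by linarith
    also have "\<dots> \<le> \<gamma> * \<bar>Re (mu * X)\<bar>"
    proof -
      have "m\<^sup>2 * Nw \<ge> 0" using P by simp
      moreover have "- (\<gamma> * Re (mu * X)) \<le> \<gamma> * \<bar>Re (mu * X)\<bar>" using g
        by (metis abs_ge_minus_self abs_mult abs_of_pos mult_minus_right)
      ultimately show ?thesis by linarith
    qed
    also have "\<dots> \<le> \<gamma> * (m * cmod X)" using RX g by (intro mult_left_mono) auto
    finally show ?thesis .
  qed
  have K1': "c * m * Nv \<le> \<gamma> * cmod X"
  proof -
    have "m * (c * m * Nv) \<le> m * (\<gamma> * cmod X)" using K1 by (simp add: power2_eq_square algebra_simps)
    then show ?thesis using mpos by simp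
  qed
  have ER: "AT + a * NT - \<gamma> * Re Y = 0"
    using arg_cong[OF E2, of Re] unfolding a_def by simp
  have EI: "b * NT - \<gamma> * Im Y = 0"
    using arg_cong[OF E2, of Im] unfolding b_def by simp
  have K2: "c * m * NT \<le> \<gamma> * cmod Y"
  proof (cases "\<bar>b\<bar> \<ge> c * m")
    case True
    then have "c * m * NT \<le> \<bar>b\<bar> * NT" using P by (intro mult_right_mono) auto
    also have "\<dots> = \<gamma> * \<bar>Im Y\<bar>" using EI g P by (simp add: abs_mult)
        (metis abs_of_nonneg abs_of_pos abs_mult)
    also have "\<dots> \<le> \<gamma> * cmod Y" using g abs_Im_le_cmod by (intro mult_left_mono) auto
    finally show ?thesis .
  next
    case False
    then have "a \<ge> c * m" using nB unfolding a_def b_def m_def by auto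
    then have "c * m * NT \<le> a * NT" using P by (intro mult_right_mono) auto
    also have "\<dots> \<le> \<gamma> * Re Y" using ER P by linarith
    also have "\<dots> \<le> \<gamma> * cmod Y" using g complex_Re_le_cmod by (intro mult_left_mono) auto
    finally show ?thesis .
  qed
  have "c * m * Nv \<le> \<gamma> * ((Nv + NT) / 2)" using K1' BX g by (meson mult_left_mono less_imp_le order_trans)
  moreover have "c * m * NT \<le> \<gamma> * ((Nv + NT) / 2)" using K2 BY g by (meson mult_left_mono less_imp_le order_trans)
  ultimately have "(c * m) * (Nv + NT) \<le> \<gamma> * (Nv + NT)" by (simp add: algebra_simps)
  then have "(c * m - \<gamma>) * (Nv + NT) \<le> 0" by (simp add: algebra_simps)
  moreover have "c * m - \<gamma> > 0" using cmg by simp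
  ultimately have "Nv + NT \<le> 0" by (simp add: mult_le_0_iff)
  then have z: "Nv = 0" "NT = 0" using P by auto
  then have "X = 0" using BX by simp
  then have "cnj mu * of_real Nw = 0" using E1 z by simp
  moreover have "mu \<noteq> 0" using mpos unfolding m_def by auto
  ultimately have "Nw = 0" by simp
  then show False using z NZ by simp
qed

theorem theorem4p3:
  fixes \<gamma> :: real and b :: thermo_bc
  assumes "\<gamma> > 0"
  shows "\<forall>\<epsilon>>0. \<exists>R. \<forall>mu. thermo_eigenvalue \<gamma> b mu \<and> cmod mu > R \<longrightarrow>
           (\<exists>n::int. n \<noteq> 0 \<and>
              (cmod (mu / (\<i> * of_int n) - 1) < \<epsilon> \<or>
               cmod (mu / (- (of_int n)\<^sup>2) - 1) < \<epsilon>))"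
proof (intro allI impI)
  fix \<epsilon> :: real assume "\<epsilon> > 0"
  define e where "e = min \<epsilon> 1"
  define c where "c = e / 4"
  have e: "0 < e" "e \<le> 1" "e \<le> \<epsilon>" unfolding e_def using \<open>\<epsilon> > 0\<close> by auto
  have cpos: "c > 0" unfolding c_def using e by simp
  define R where "R = max (\<gamma> / c) (max (2/e + 2) (2 * (4/e + 1)\<^sup>2))"
  show "\<exists>R. \<forall>mu. thermo_eigenvalue \<gamma> b mu \<and> cmod mu > R \<longrightarrow>
           (\<exists>n::int. n \<noteq> 0 \<and>
              (cmod (mu / (\<i> * of_int n) - 1) < \<epsilon> \<or>
               cmod (mu / (- (of_int n)\<^sup>2) - 1) < \<epsilon>))"
  proof (intro exI[of _ R] allI impI)
    fix mu assume H: "thermo_eigenvalue \<gamma> b mu \<and> cmod mu > R"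
    then have mR: "cmod mu > \<gamma> / c" "cmod mu > 2/e + 2" "cmod mu > 2 * (4/e + 1)\<^sup>2"
      unfolding R_def by auto
    show "\<exists>n::int. n \<noteq> 0 \<and>
              (cmod (mu / (\<i> * of_int n) - 1) < \<epsilon> \<or>
               cmod (mu / (- (of_int n)\<^sup>2) - 1) < \<epsilon>)"
    proof (cases "2 * \<bar>Re mu * Im mu\<bar> < c * (cmod mu)\<^sup>2 \<and> (Re mu)\<^sup>2 - (Im mu)\<^sup>2 < c * (cmod mu)\<^sup>2")
      case True
      then obtain n :: int where "n \<noteq> 0" "cmod (mu / (\<i> * of_int n) - 1) < e"
        using caseA[OF e(1,2) c_def _ _ mR(2)] by blast
      then show ?thesis using e(3) by force
    next
      case nA: False
      show ?thesis
      proof (cases "\<bar>Im mu\<bar> < c * cmod mu \<and> Re mu < c * cmod mu")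
        case True
        then obtain n :: int where "n \<noteq> 0" "cmod (mu / (- (of_int n)\<^sup>2) - 1) < e"
          using caseB[OF e(1,2) c_def _ _ mR(3)] by blast
        then show ?thesis using e(3) by force
      next
        case nB: False
        obtain Nv Nw NT AT X Y where I: "Nv \<ge> 0" "Nw \<ge> 0" "NT \<ge> 0" "AT \<ge> 0"
          "mu * of_real Nv + cnj mu * of_real Nw + of_real \<gamma> * X = 0"
          "of_real AT + mu * of_real NT - of_real \<gamma> * Y = 0"
          "cmod X \<le> (Nv + NT) / 2" "cmod Y \<le> (Nv + NT) / 2" "\<not> (Nv = 0 \<and> Nw = 0 \<and> NT = 0)"
          using eig_identities[of \<gamma> b mu] H by blast
        have False
          by (rule alg_main[OF assms cpos I mR(1) nA nB])
        then show ?thesis ..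
      qed
    qed
  qed
qed

end
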